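(* For the modular data of the quantum double of $S_3$, each of the trace three modular invariants $Z_{24},Z_{42},Z_{35},Z_{53},Z_{44},Z_{(55)},Z_{(44)}$ has, up to equivalence, exactly one matching nimrep.
   Context: Primaries $0,\dots,7$, all self-conjugate, with $S=\frac16\begin{pmatrix}1&1&2&2&2&2&3&3\\1&1&2&2&2&2&-3&-3\\2&2&4&-2&-2&-2&0&0\\2&2&-2&4&-2&-2&0&0\\2&2&-2&-2&-2&4&0&0\\2&2&-2&-2&4&-2&0&0\\3&-3&0&0&0&0&3&-3\\3&-3&0&0&0&0&-3&3\end{pmatrix}$, fusion coefficients $N_{\lambda\mu}^\nu=\sum_\rho S_{\lambda\rho}S_{\mu\rho}\overline{S_{\nu\rho}}/S_{0\rho}$. Matrices are written as $\sum Z_{\lambda\mu}\chi_\lambda\chi_\mu^*$, and $st^*$ for linear forms is the matrix of products of coefficients. With $s_2=\chi_0+\chi_1+2\chi_2$, $s_3=\chi_0+\chi_1+2\chi_3$, $s_4=\chi_0+\chi_2+\chi_6$, $s_5=\chi_0+\chi_3+\chi_6$: $Z_{ij}=s_is_j^*$. $Z_{(44)}=|\chi_0+\chi_2|^2+\chi_1\chi_6^*+\chi_2\chi_6^*+\chi_6\chi_1^*+\chi_6\chi_2^*+|\chi_7|^2$, $Z_{(55)}=|\chi_0+\chi_3|^2+\chi_1\chi_6^*+\chi_3\chi_6^*+\chi_6\chi_1^*+\chi_6\chi_3^*+|\chi_7|^2$. A nimrep of dimension $n$: non-negative integer $n\times n$ matrices $G_\lambda$ with $G_0=I$, $G_{\bar\lambda}=G_\lambda^t$,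 $G_\lambda G_\mu=\sum_\nu N_{\lambda\mu}^\nu G_\nu$; nimreps are equivalent if conjugate by a common permutation matrix. $\mathrm{Exp}(Z)$ is the multiset with $Z_{\mu\mu}$ copies of $\mu$. A nimrep matches $Z$ if $n=\mathrm{Tr}\,Z$ and the $G_\lambda$ are simultaneously unitarily diagonalisable with joint eigenvalues $(S_{\lambda\mu}/S_{0\mu})_\lambda$, $\mu$ running through $\mathrm{Exp}(Z)$ with multiplicity. *)

theory Defs
  imports Complex_Main "HOL-Library.Multiset" "HOL-Combinatorics.Permutations"
begin

text \<open>Modular data of the quantum double of S3: primaries 0..7, all self-conjugate.\<close>

definition S_num :: "int list list" where
  "S_num = [[1,1,2,2,2,2,3,3],
            [1,1,2,2,2,2,-3,-3],
            [2,2,4,-2,-2,-2,0,0],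
            [2,2,-2,4,-2,-2,0,0],
            [2,2,-2,-2,-2,4,0,0],
            [2,2,-2,-2,4,-2,0,0],
            [3,-3,0,0,0,0,3,-3],
            [3,-3,0,0,0,0,-3,3]]"

definition S :: "nat \<Rightarrow> nat \<Rightarrow> complex" where
  "S l m = of_int (S_num ! l ! m) / 6"

definition prim_conj :: "nat \<Rightarrow> nat" where
  "prim_conj l = l"

definition fusion :: "nat \<Rightarrow> nat \<Rightarrow> nat \<Rightarrow> complex" where
  "fusion l m n = (\<Sum>r<8. S l r * S m r * cnj (S n r) / S 0 r)"

text \<open>Modular invariants as functions Z l m (coefficient of chi_l chi_m^*).\<close>

definition lin_prod :: "(nat \<Rightarrow> nat) \<Rightarrow> (nat \<Rightarrow> nat) \<Rightarrow> nat \<Rightarrow> nat \<Rightarrow> nat" where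
  "lin_prod s t l m = s l * t m"

definition vec_of :: "nat list \<Rightarrow> nat \<Rightarrow> nat" where
  "vec_of xs l = (if l < length xs then xs ! l else 0)"

definition s2 :: "nat \<Rightarrow> nat" where "s2 = vec_of [1,1,2,0,0,0,0,0]"
definition s3 :: "nat \<Rightarrow> nat" where "s3 = vec_of [1,1,0,2,0,0,0,0]"
definition s4 :: "nat \<Rightarrow> nat" where "s4 = vec_of [1,0,1,0,0,0,1,0]"
definition s5 :: "nat \<Rightarrow> nat" where "s5 = vec_of [1,0,0,1,0,0,1,0]"

definition mat_of :: "nat list list \<Rightarrow> nat \<Rightarrow> nat \<Rightarrow> nat" where
  "mat_of xss l m = (if l < length xss \<and> m < length (xss ! l) then xss ! l ! m else 0)"

definition Z24 where "Z24 = lin_prod s2 s4"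
definition Z42 where "Z42 = lin_prod s4 s2"
definition Z35 where "Z35 = lin_prod s3 s5"
definition Z53 where "Z53 = lin_prod s5 s3"
definition Z44 where "Z44 = lin_prod s4 s4"

text \<open>Z_(44) = |chi0+chi2|^2 + chi1 chi6^* + chi2 chi6^* + chi6 chi1^* + chi6 chi2^* + |chi7|^2\<close>
definition Z44p :: "nat \<Rightarrow> nat \<Rightarrow> nat" where
  "Z44p = mat_of [[1,0,1,0,0,0,0,0],
                  [0,0,0,0,0,0,1,0],
                  [1,0,1,0,0,0,1,0],
                  [0,0,0,0,0,0,0,0],
                  [0,0,0,0,0,0,0,0],
                  [0,0,0,0,0,0,0,0],
                  [0,1,1,0,0,0,0,0],
                  [0,0,0,0,0,0,0,1]]"

text \<open>Z_(55) = |chi0+chi3|^2 + chi1 chi6^* + chi3 chi6^* + chi6 chi1^* + chi6 chi3^* + |chi7|^2\<close>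
definition Z55p :: "nat \<Rightarrow> nat \<Rightarrow> nat" where
  "Z55p = mat_of [[1,0,0,1,0,0,0,0],
                  [0,0,0,0,0,0,1,0],
                  [0,0,0,0,0,0,0,0],
                  [1,0,0,1,0,0,1,0],
                  [0,0,0,0,0,0,0,0],
                  [0,0,0,0,0,0,0,0],
                  [0,1,0,1,0,0,0,0],
                  [0,0,0,0,0,0,0,1]]"

definition trace8 :: "(nat \<Rightarrow> nat \<Rightarrow> nat) \<Rightarrow> nat" where
  "trace8 Z = (\<Sum>m<8. Z m m)"

definition Exp :: "(nat \<Rightarrow> nat \<Rightarrow> nat) \<Rightarrow> nat multiset" where
  "Exp Z = (\<Sum>m<8. replicate_mset (Z m m) m)"

text \<open>A nimrep of dimension n: G l i j is the (i,j) entry of G_l, for l < 8 and i,j < n.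
  Entries are natural numbers (non-negative integers).\<close>
definition nimrep :: "nat \<Rightarrow> (nat \<Rightarrow> nat \<Rightarrow> nat \<Rightarrow> nat) \<Rightarrow> bool" where
  "nimrep n G \<longleftrightarrow>
     (\<forall>i<n. \<forall>j<n. G 0 i j = (if i = j then 1 else 0)) \<and>
     (\<forall>l<8. \<forall>i<n. \<forall>j<n. G (prim_conj l) i j = G l j i) \<and>
     (\<forall>l<8. \<forall>m<8. \<forall>i<n. \<forall>j<n.
        of_nat (\<Sum>k<n. G l i k * G m k j) = (\<Sum>v<8. fusion l m v * of_nat (G v i j)))"

definition nimrep_equiv ::
  "nat \<Rightarrow> (nat \<Rightarrow> nat \<Rightarrow> nat \<Rightarrow> nat) \<Rightarrow> nat \<Rightarrow> (nat \<Rightarrow> nat \<Rightarrow> nat \<Rightarrow> nat) \<Rightarrow> bool" where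
  "nimrep_equiv n G n' G' \<longleftrightarrow> n = n' \<and>
     (\<exists>p. p permutes {..<n} \<and> (\<forall>l<8. \<forall>i<n. \<forall>j<n. G' l i j = G l (p i) (p j)))"

definition unitary_mat :: "nat \<Rightarrow> (nat \<Rightarrow> nat \<Rightarrow> complex) \<Rightarrow> bool" where
  "unitary_mat n U \<longleftrightarrow>
     (\<forall>i<n. \<forall>j<n. (\<Sum>k<n. cnj (U k i) * U k j) = (if i = j then 1 else 0))"

definition matches :: "(nat \<Rightarrow> nat \<Rightarrow> nat) \<Rightarrow> nat \<Rightarrow> (nat \<Rightarrow> nat \<Rightarrow> nat \<Rightarrow> nat) \<Rightarrow> bool" where
  "matches Z n G \<longleftrightarrow> nimrep n G \<and> n = trace8 Z \<and>
     (\<exists>U mu. unitary_mat n U \<and> mset (map mu [0..<n]) = Exp Z \<and>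
        (\<forall>l<8. \<forall>i<n. \<forall>j<n.
           (\<Sum>a<n. \<Sum>b<n. cnj (U a i) * of_nat (G l a b) * U b j)
             = (if i = j then S l (mu i) / S 0 (mu i) else 0)))"

end

theory Submission
  imports Defs "Jordan_Normal_Form.Determinant"
begin

definition Sn :: "nat \<Rightarrow> nat \<Rightarrow> int" where "Sn l r = S_num ! l ! r"
definition wv :: "nat \<Rightarrow> int" where "wv r = [6,6,3,3,3,3,2,2] ! r"
definition Fi :: "nat \<Rightarrow> nat \<Rightarrow> nat \<Rightarrow> int" where
  "Fi l m v = (\<Sum>r\<leftarrow>[0..<8]. Sn l r * Sn m r * Sn v r * wv r)"

lemma sum8: "(\<Sum>r<8. (f::nat\<Rightarrow>_) r) = f 0 + f 1 + f 2 + f 3 + f 4 + f 5 + f 6 + (f 7 :: 'a::comm_monoid_add)"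
  by (simp add: eval_nat_numeral lessThan_Suc add_ac)
lemma sum3: "(\<Sum>r<3. (f::nat\<Rightarrow>_) r) = f 0 + f 1 + (f 2 :: 'a::comm_monoid_add)"
  by (simp add: eval_nat_numeral lessThan_Suc add_ac)

lemma S_Sn: "S l r = of_int (Sn l r) / 6" by (simp add: S_def Sn_def)

lemma w_ok: "r < 8 \<Longrightarrow> Sn 0 r * wv r = 6"
  by (simp add: less_Suc_eq eval_nat_numeral Sn_def wv_def S_num_def) (elim disjE; simp)

lemma fusion_Fi: "fusion l m v = of_int (Fi l m v) / 216"
proof -
  have "fusion l m v = (\<Sum>r<8. of_int (Sn l r * Sn m r * Sn v r * wv r) / 216)"
    unfolding fusion_def
  proof (rule sum.cong[OF refl])
    fix r assume r: "r \<in> {..<8::nat}"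
    have w: "Sn 0 r * wv r = 6" using r w_ok by simp
    hence nz: "(of_int (Sn 0 r) :: complex) \<noteq> 0" by auto
    have w': "(of_int (Sn 0 r) :: complex) * of_int (wv r) = 6"
      using arg_cong[OF w, of "of_int :: int \<Rightarrow> complex"] by simp
    show "S l r * S m r * cnj (S v r) / S 0 r = of_int (Sn l r * Sn m r * Sn v r * wv r) / 216"
      using nz w' by (simp add: S_Sn field_simps)
  qed
  also have "\<dots> = of_int (Fi l m v) / 216"
    by (simp add: Fi_def sum_divide_distrib[symmetric] sum_set_upt_conv_sum_list_nat[symmetric] atLeast_upt lessThan_atLeast0)
  finally show ?thesis .
qed

definition idm :: "nat \<Rightarrow> nat \<Rightarrow> nat" where "idm i j = (if i = j then 1 else 0)"
definition Pf :: "nat \<Rightarrow> nat \<Rightarrow> nat \<Rightarrow> nat" where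
  "Pf a i j = (if i = a \<and> j = a then 1 else if i \<noteq> a \<and> j \<noteq> a \<and> i \<noteq> j then 1 else 0)"
definition Yf :: "nat \<Rightarrow> nat \<Rightarrow> nat \<Rightarrow> nat" where
  "Yf a i j = (if i = a \<or> j = a then 1 else 0)"

lemma three_cases: "a<3 \<Longrightarrow> b<3 \<Longrightarrow> c<3 \<Longrightarrow> a\<noteq>b \<Longrightarrow> a\<noteq>c \<Longrightarrow> b\<noteq>c \<Longrightarrow> i<(3::nat) \<Longrightarrow> i = a \<or> i = b \<or> i = c"
  by auto

lemma sum3_abc:
  assumes "(a::nat)<3" "b<3" "c<3" "a\<noteq>b" "a\<noteq>c" "b\<noteq>c"
  shows "(\<Sum>k<3. f k) = f a + f b + (f c :: 'x::comm_monoid_add)"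
proof -
  have "{..<3::nat} = {a,b,c}" using assms by auto
  thus ?thesis using assms by (simp add: add_ac)
qed

lemma sq1: "(x::nat) * x = 1 \<longleftrightarrow> x = 1" by simp

lemma coreC_case:
  fixes P Y :: "nat \<Rightarrow> nat \<Rightarrow> nat" and a b c :: nat
  assumes abc: "a<3" "b<3" "c<3" "a\<noteq>b" "a\<noteq>c" "b\<noteq>c"
  and symP: "\<forall>i<3. \<forall>j<3. P i j = P j i" and symY: "\<forall>i<3. \<forall>j<3. Y i j = Y j i"
  and PP: "\<forall>i<3. \<forall>j<3. (\<Sum>k<3. P i k * P k j) = idm i j"
  and PY: "\<forall>i<3. \<forall>j<3. (\<Sum>k<3. P i k * Y k j) = Y i j"
  and YY: "\<forall>i<3. \<forall>j<3. (\<Sum>k<3. Y i k * Y k j) = idm i j + P i j + Y i j"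
  and trY: "(\<Sum>i<3. Y i i) = 1"
  and Pa: "P a a = 1" "P b b = 0" "P c c = 0"
  shows "\<forall>i<3. \<forall>j<3. P i j = Pf a i j \<and> Y i j = Yf a i j"
proof -
  note s3 = sum3_abc[OF abc]
  have sP: "P b a = P a b" "P c a = P a c" "P c b = P b c" using symP abc by auto
  have sY: "Y b a = Y a b" "Y c a = Y a c" "Y c b = Y b c" using symY abc by auto
  have "P a b = 0 \<and> P a c = 0" using PP[rule_format, of a a] abc Pa sP by (simp add: s3 idm_def)
  hence p1: "P a b = 0" "P a c = 0" by auto
  have "P b c * P b c = 1" using PP[rule_format, of b b] abc Pa sP p1 by (simp add: s3 idm_def)
  hence p2: "P b c = 1" by simp
  have y1: "Y c j = Y b j" if "j<3" for j using PY[rule_format, of b j] abc Pa sP p1 p2 that by (simp add: s3)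
  have "Y a a + Y b b + Y c c = 1" using trY by (simp add: s3)
  moreover have "Y c c = Y b b" "Y b c = Y b b" using y1[of c] y1[of b] sY abc by auto
  ultimately have "Y b b = 0" "Y a a = 1" by presburger+
  with \<open>Y c c = Y b b\<close> \<open>Y b c = Y b b\<close> have y2: "Y b b = 0" "Y c c = 0" "Y a a = 1" "Y b c = 0" by auto
  have "Y a b = Y a c" using y1[of a] sY abc by auto
  moreover have "Y a a * Y a a + Y a b * Y b a + Y a c * Y c a = 1 + P a a + Y a a"
    using YY[rule_format, of a a] abc by (simp add: s3 idm_def)
  ultimately have "Y a c * Y a c + Y a c * Y a c = 2" using y2 Pa sY by simp
  hence "Y a c * Y a c = 1" by linarith
  hence y3: "Y a b = 1" "Y a c = 1" using \<open>Y a b = Y a c\<close> by auto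
  have Pv: "P a a = 1" "P a b = 0" "P a c = 0" "P b a = 0" "P b b = 0" "P b c = 1"
    "P c a = 0" "P c b = 1" "P c c = 0" using Pa p1 p2 sP by simp_all
  have Yv: "Y a a = 1" "Y a b = 1" "Y a c = 1" "Y b a = 1" "Y b b = 0" "Y b c = 0"
    "Y c a = 1" "Y c b = 0" "Y c c = 0" using y2 y3 sY by simp_all
  have Pfv: "Pf a a a = 1" "Pf a a b = 0" "Pf a a c = 0" "Pf a b a = 0" "Pf a b b = 0" "Pf a b c = 1"
    "Pf a c a = 0" "Pf a c b = 1" "Pf a c c = 0" using abc by (simp_all add: Pf_def)
  have Yfv: "Yf a a a = 1" "Yf a a b = 1" "Yf a a c = 1" "Yf a b a = 1" "Yf a b b = 0" "Yf a b c = 0"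
    "Yf a c a = 1" "Yf a c b = 0" "Yf a c c = 0" using abc by (simp_all add: Yf_def)
  show ?thesis
  proof (intro allI impI)
    fix i j :: nat assume i: "i<3" and j: "j<3"
    from three_cases[OF abc i] three_cases[OF abc j]
    show "P i j = Pf a i j \<and> Y i j = Yf a i j"
      by (elim disjE) (simp_all only: Pv Yv Pfv Yfv)
  qed
qed

lemma coreC:
  fixes P Y :: "nat \<Rightarrow> nat \<Rightarrow> nat"
  assumes symP: "\<forall>i<3. \<forall>j<3. P i j = P j i" and symY: "\<forall>i<3. \<forall>j<3. Y i j = Y j i"
  and PP: "\<forall>i<3. \<forall>j<3. (\<Sum>k<3. P i k * P k j) = idm i j"
  and PY: "\<forall>i<3. \<forall>j<3. (\<Sum>k<3. P i k * Y k j) = Y i j"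
  and YY: "\<forall>i<3. \<forall>j<3. (\<Sum>k<3. Y i k * Y k j) = idm i j + P i j + Y i j"
  and trP: "(\<Sum>i<3. P i i) = 1"
  and trY: "(\<Sum>i<3. Y i i) = 1"
  shows "\<exists>a<3. \<forall>i<3. \<forall>j<3. P i j = Pf a i j \<and> Y i j = Yf a i j"
proof -
  have "P 0 0 + P 1 1 + P 2 2 = 1" using trP by (simp add: sum3_abc[of 0 1 2])
  hence "(P 0 0 = 1 \<and> P 1 1 = 0 \<and> P 2 2 = 0) \<or> (P 1 1 = 1 \<and> P 0 0 = 0 \<and> P 2 2 = 0) \<or>
         (P 2 2 = 1 \<and> P 0 0 = 0 \<and> P 1 1 = 0)" by auto
  thus ?thesis
  proof (elim disjE conjE)
    assume "P 0 0 = 1" "P 1 1 = 0" "P 2 2 = 0"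
    hence "\<forall>i<3. \<forall>j<3. P i j = Pf 0 i j \<and> Y i j = Yf 0 i j"
      using coreC_case[of 0 1 2 P Y, OF _ _ _ _ _ _ symP symY PP PY YY trY] by simp
    thus ?thesis by (intro exI[where x=0]) simp
  next
    assume "P 1 1 = 1" "P 0 0 = 0" "P 2 2 = 0"
    hence "\<forall>i<3. \<forall>j<3. P i j = Pf 1 i j \<and> Y i j = Yf 1 i j"
      using coreC_case[of 1 0 2 P Y, OF _ _ _ _ _ _ symP symY PP PY YY trY] by simp
    thus ?thesis by (intro exI[where x=1]) simp
  next
    assume "P 2 2 = 1" "P 0 0 = 0" "P 1 1 = 0"
    hence "\<forall>i<3. \<forall>j<3. P i j = Pf 2 i j \<and> Y i j = Yf 2 i j"
      using coreC_case[of 2 0 1 P Y, OF _ _ _ _ _ _ symP symY PP PY YY trY] by simp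
    thus ?thesis by (intro exI[where x=2]) simp
  qed
qed

lemma coreA:
  fixes Q Y :: "nat \<Rightarrow> nat \<Rightarrow> nat"
  assumes symQ: "\<forall>i<3. \<forall>j<3. Q i j = Q j i"
  and QY: "\<forall>i<3. \<forall>j<3. Q i j = idm i j + Y i j"
  and QQ: "\<forall>i<3. \<forall>j<3. (\<Sum>k<3. Q i k * Q k j) = 3 * idm i j + 3 * Y i j"
  and trQ: "(\<Sum>i<3. Q i i) = 3"
  shows "\<forall>i<3. \<forall>j<3. Q i j = 1 \<and> Y i j = 1 - idm i j"
proof -
  note s3 = sum3_abc[of 0 1 2, simplified]
  have d: "Q 0 0 \<ge> 1" "Q 1 1 \<ge> 1" "Q 2 2 \<ge> 1" using QY by (auto simp: idm_def)
  have "Q 0 0 + Q 1 1 + Q 2 2 = 3" using trQ by (simp add: s3)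
  hence d2: "Q 0 0 = 1" "Q 1 1 = 1" "Q 2 2 = 1" using d by auto
  hence yd: "Y 0 0 = 0" "Y 1 1 = 0" "Y 2 2 = 0" using QY by (auto simp: idm_def dest: spec[of _ 0] spec[of _ 1] spec[of _ 2])
  have sQ: "Q 1 0 = Q 0 1" "Q 2 0 = Q 0 2" "Q 2 1 = Q 1 2" using symQ by auto
  have r0: "Q 0 1 * Q 0 1 + Q 0 2 * Q 0 2 = 2" using QQ[rule_format, of 0 0] d2 yd sQ by (simp add: s3 idm_def)
  have r1: "Q 0 1 * Q 0 1 + Q 1 2 * Q 1 2 = 2" using QQ[rule_format, of 1 1] d2 yd sQ by (simp add: s3 idm_def)
  have r2: "Q 0 2 * Q 0 2 + Q 1 2 * Q 1 2 = 2" using QQ[rule_format, of 2 2] d2 yd sQ by (simp add: s3 idm_def)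
  have "Q 0 1 * Q 0 1 = 1" "Q 0 2 * Q 0 2 = 1" "Q 1 2 * Q 1 2 = 1" using r0 r1 r2 by linarith+
  hence o: "Q 0 1 = 1" "Q 0 2 = 1" "Q 1 2 = 1" by simp_all
  have Qall: "Q i j = 1" if "i<3" "j<3" for i j
  proof -
    have "i = 0 \<or> i = 1 \<or> i = 2" "j = 0 \<or> j = 1 \<or> j = 2" using that by auto
    thus ?thesis by (elim disjE) (simp_all only: d2 o sQ)
  qed
  show ?thesis
  proof (intro allI impI conjI)
    fix i j :: nat assume "i<3" "j<3"
    thus "Q i j = 1" by (rule Qall)
    thus "Y i j = 1 - idm i j" using QY \<open>i<3\<close> \<open>j<3\<close> by (auto simp: idm_def)
  qed
qed

lemma unit_diag:
  fixes U X :: "nat \<Rightarrow> nat \<Rightarrow> complex" and d :: "nat \<Rightarrow> complex"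
  assumes un: "unitary_mat n U"
  and dg: "\<forall>i<n. \<forall>j<n. (\<Sum>a<n. \<Sum>b<n. cnj (U a i) * X a b * U b j) = (if i = j then d i else 0)"
  shows "\<forall>i<n. \<forall>j<n. X i j = (\<Sum>k<n. U i k * d k * cnj (U j k))"
proof -
  define A where "A = mat n n (\<lambda>(i,j). cnj (U j i))"
  define B where "B = mat n n (\<lambda>(i,j). U i j)"
  define M where "M = mat n n (\<lambda>(i,j). X i j)"
  define D where "D = mat n n (\<lambda>(i,j). if i = j then d i else 0)"
  have cA: "A \<in> carrier_mat n n" and cB: "B \<in> carrier_mat n n" and cM: "M \<in> carrier_mat n n"
    and cD: "D \<in> carrier_mat n n" by (auto simp: A_def B_def M_def D_def)
  have AB: "A * B = 1\<^sub>m n"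
    using un unfolding unitary_mat_def
    by (intro eq_matI) (auto simp: A_def B_def scalar_prod_def lessThan_atLeast0)
  have BA: "B * A = 1\<^sub>m n" using mat_mult_left_right_inverse[OF cA cB AB] .
  have AMB: "A * M * B = D"
  proof (intro eq_matI)
    fix i j assume ij: "i < dim_row D" "j < dim_col D"
    hence "(A * M * B) $$ (i, j) = (\<Sum>b<n. (\<Sum>a<n. cnj (U a i) * X a b) * U b j)"
      by (simp add: A_def B_def M_def D_def scalar_prod_def lessThan_atLeast0)
    also have "\<dots> = (\<Sum>a<n. \<Sum>b<n. cnj (U a i) * X a b * U b j)"
      by (subst sum.swap) (simp add: sum_distrib_right)
    also have "\<dots> = D $$ (i, j)" using dg ij by (simp add: D_def)
    finally show "(A * M * B) $$ (i, j) = D $$ (i, j)" .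
  qed (auto simp: A_def B_def M_def D_def)
  have "M = (B * A) * M * (B * A)" using cM by (simp add: BA)
  also have "\<dots> = B * (A * M * B) * A"
    using cA cB cM by (simp add: assoc_mult_mat[of _ n n _ n _ n])
  also have "\<dots> = B * D * A" by (simp add: AMB)
  finally have MBDA: "M = B * D * A" .
  show ?thesis
  proof (intro allI impI)
    fix i j assume i: "i < n" and j: "j < n"
    have "X i j = M $$ (i, j)" using i j by (simp add: M_def)
    also have "\<dots> = (B * D * A) $$ (i, j)" by (simp add: MBDA)
    also have "\<dots> = (\<Sum>k<n. (\<Sum>k'<n. U i k' * (if k' = k then d k' else 0)) * cnj (U j k))"
      using i j by (simp add: A_def B_def D_def scalar_prod_def lessThan_atLeast0)
    also have "\<dots> = (\<Sum>k<n. U i k * d k * cnj (U j k))"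
      by (simp add: if_distrib cong: if_cong)
    finally show "X i j = (\<Sum>k<n. U i k * d k * cnj (U j k))" .
  qed
qed


definition dd :: "nat \<Rightarrow> nat \<Rightarrow> complex" where "dd l m = S l m / S 0 m"

definition rep :: "nat \<Rightarrow> (nat \<Rightarrow> nat \<Rightarrow> complex) \<Rightarrow> (nat \<Rightarrow> nat) \<Rightarrow> (nat \<Rightarrow> nat \<Rightarrow> nat \<Rightarrow> nat) \<Rightarrow> bool" where
  "rep n U mu G \<longleftrightarrow> (\<forall>l<8. \<forall>i<n. \<forall>j<n. of_nat (G l i j) = (\<Sum>k<n. U i k * dd l (mu k) * cnj (U j k)))"

lemma matches_rep:
  assumes "matches Z n G"
  shows "nimrep n G" "n = trace8 Z"
    "\<exists>U mu. unitary_mat n U \<and> mset (map mu [0..<n]) = Exp Z \<and> rep n U mu G"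
proof -
  show "nimrep n G" "n = trace8 Z" using assms by (auto simp: matches_def)
  from assms obtain U mu where un: "unitary_mat n U" and ms: "mset (map mu [0..<n]) = Exp Z"
    and dg: "\<forall>l<8. \<forall>i<n. \<forall>j<n.
           (\<Sum>a<n. \<Sum>b<n. cnj (U a i) * of_nat (G l a b) * U b j)
             = (if i = j then S l (mu i) / S 0 (mu i) else 0)" by (auto simp: matches_def)
  have "rep n U mu G" unfolding rep_def
  proof (intro allI impI)
    fix l i j assume l: "l < (8::nat)" and i: "i < n" and j: "j < n"
    have "\<forall>i<n. \<forall>j<n. (of_nat (G l i j) :: complex) = (\<Sum>k<n. U i k * dd l (mu k) * cnj (U j k))"
      by (rule unit_diag[OF un]) (use dg l in \<open>simp add: dd_def\<close>)
    thus "(of_nat (G l i j) :: complex) = (\<Sum>k<n. U i k * dd l (mu k) * cnj (U j k))" using i j by blast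
  qed
  thus "\<exists>U mu. unitary_mat n U \<and> mset (map mu [0..<n]) = Exp Z \<and> rep n U mu G" using un ms by blast
qed

lemma rep_trace:
  assumes un: "unitary_mat n U" and rp: "rep n U mu G" and l: "l < 8"
  shows "of_nat (\<Sum>i<n. G l i i) = (\<Sum>k<n. dd l (mu k))"
proof -
  have "(of_nat (\<Sum>i<n. G l i i) :: complex) = (\<Sum>i<n. \<Sum>k<n. U i k * dd l (mu k) * cnj (U i k))"
    using rp l by (simp add: rep_def)
  also have "\<dots> = (\<Sum>k<n. dd l (mu k) * (\<Sum>i<n. cnj (U i k) * U i k))"
    by (subst sum.swap) (simp add: sum_distrib_left mult_ac)
  also have "\<dots> = (\<Sum>k<n. dd l (mu k))"
    using un by (simp add: unitary_mat_def)
  finally show ?thesis .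
qed

lemma rep_add:
  assumes rp: "rep n U mu G" and l: "l1 < 8" "l2 < 8" "l3 < 8"
  and d: "\<forall>k<n. dd l1 (mu k) = dd l2 (mu k) + dd l3 (mu k)"
  shows "\<forall>i<n. \<forall>j<n. G l1 i j = G l2 i j + G l3 i j"
proof (intro allI impI)
  fix i j assume i: "i < n" and j: "j < n"
  have "(of_nat (G l1 i j) :: complex) = (\<Sum>k<n. U i k * (dd l2 (mu k) + dd l3 (mu k)) * cnj (U j k))"
    using rp l i j d by (simp add: rep_def)
  also have "\<dots> = (\<Sum>k<n. U i k * dd l2 (mu k) * cnj (U j k)) + (\<Sum>k<n. U i k * dd l3 (mu k) * cnj (U j k))"
    by (simp add: distrib_left distrib_right sum.distrib)
  also have "\<dots> = of_nat (G l2 i j) + of_nat (G l3 i j)" using rp l i j by (simp add: rep_def)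
  finally show "G l1 i j = G l2 i j + G l3 i j" by (metis of_nat_add of_nat_eq_iff)
qed

lemma rep_eq:
  assumes rp: "rep n U mu G" and l: "l1 < 8" "l2 < 8"
  and d: "\<forall>k<n. dd l1 (mu k) = dd l2 (mu k)"
  shows "\<forall>i<n. \<forall>j<n. G l1 i j = G l2 i j"
proof (intro allI impI)
  fix i j assume i: "i < n" and j: "j < n"
  have "(of_nat (G l1 i j) :: complex) = of_nat (G l2 i j)"
    using rp l i j d by (simp add: rep_def)
  thus "G l1 i j = G l2 i j" by (metis of_nat_eq_iff)
qed

lemma msum:
  assumes "mset (map mu [0..<n]) = M"
  shows "(\<Sum>k<n. f (mu k)) = sum_mset (image_mset f M)"
proof -
  have "(\<Sum>k<n. f (mu k)) = sum_list (map f (map mu [0..<n]))"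
    by (simp add: sum_set_upt_conv_sum_list_nat[symmetric] atLeast_upt lessThan_atLeast0 comp_def)
  also have "\<dots> = sum_mset (image_mset f (mset (map mu [0..<n])))"
    by (metis mset_map sum_mset_sum_list)
  finally show ?thesis using assms by simp
qed

lemma mu_in:
  assumes "mset (map mu [0..<n]) = M" "k < n"
  shows "mu k \<in># M"
proof -
  have "mu k \<in> set (map mu [0..<n])" using assms(2) by simp
  thus ?thesis using assms(1) by (metis set_mset_mset)
qed

lemma nim_prod:
  assumes "nimrep n G" "l < 8" "m < 8" "i < n" "j < n"
  shows "of_nat (\<Sum>k<n. G l i k * G m k j) = (\<Sum>v<8. of_int (Fi l m v) / 216 * (of_nat (G v i j) :: complex))"
  using assms by (simp add: nimrep_def fusion_Fi)

lemma nim_sym: "nimrep n G \<Longrightarrow> l < 8 \<Longrightarrow> i < n \<Longrightarrow> j < n \<Longrightarrow> G l i j = G l j i"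
  by (simp add: nimrep_def prim_conj_def)

lemma nim_id: "nimrep n G \<Longrightarrow> i < n \<Longrightarrow> j < n \<Longrightarrow> G 0 i j = idm i j"
  by (simp add: nimrep_def idm_def)

lemma Fi_11: "map (Fi 1 1) [0..<8] = [216,0,0,0,0,0,0,0]"
  by (simp add: Fi_def Sn_def wv_def S_num_def upt_rec)

definition canC :: "nat \<Rightarrow> nat \<Rightarrow> nat \<Rightarrow> nat \<Rightarrow> nat" where
  "canC a l i j = (if l = 0 then idm i j else if l = 1 then Pf a i j else if l = 2 then idm i j + Pf a i j
     else if l = 3 \<or> l = 4 \<or> l = 5 then Yf a i j else if l = 6 then idm i j + Yf a i j else Pf a i j + Yf a i j)"

lemma l8_cases: "l < (8::nat) \<Longrightarrow> l = 0 \<or> l = 1 \<or> l = 2 \<or> l = 3 \<or> l = 4 \<or> l = 5 \<or> l = 6 \<or> l = 7"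
  by auto

definition canD :: "nat \<Rightarrow> nat \<Rightarrow> nat \<Rightarrow> nat \<Rightarrow> nat" where
  "canD a l i j = (if l = 0 then idm i j else if l = 1 then Pf a i j else if l = 2 then idm i j + Pf a i j
     else if l = 3 \<or> l = 4 \<or> l = 5 then Yf a i j else if l = 6 then Pf a i j + Yf a i j else idm i j + Yf a i j)"

definition canE :: "nat \<Rightarrow> nat \<Rightarrow> nat \<Rightarrow> nat \<Rightarrow> nat" where
  "canE a l i j = (if l = 0 then idm i j else if l = 1 then Pf a i j else if l = 3 then idm i j + Pf a i j
     else if l = 2 \<or> l = 4 \<or> l = 5 then Yf a i j else if l = 6 then Pf a i j + Yf a i j else idm i j + Yf a i j)"

definition canA :: "nat \<Rightarrow> nat \<Rightarrow> nat \<Rightarrow> nat \<Rightarrow> nat" where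
  "canA a l i j = (if l = 0 \<or> l = 1 then idm i j else if l = 2 then 2 * idm i j
     else if l = 3 \<or> l = 4 \<or> l = 5 then 1 - idm i j else 1)"

definition canB :: "nat \<Rightarrow> nat \<Rightarrow> nat \<Rightarrow> nat \<Rightarrow> nat" where
  "canB a l i j = (if l = 0 \<or> l = 1 then idm i j else if l = 3 then 2 * idm i j
     else if l = 2 \<or> l = 4 \<or> l = 5 then 1 - idm i j else 1)"

lemma uniqC:
  assumes nim: "nimrep 3 G" and un: "unitary_mat 3 U" and ms: "mset (map mu [0..<3]) = {#0,2,6#}"
    and rp: "rep 3 U mu G"
  shows "\<exists>a<3. \<forall>l<8. \<forall>i<3. \<forall>j<3. G l i j = canC a l i j"
proof -
  have mu: "mu k = 0 \<or> mu k = 2 \<or> mu k = 6" if "k<3" for k using mu_in[OF ms that] by auto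
  have allmu: "\<And>Q. Q 0 \<Longrightarrow> Q 2 \<Longrightarrow> Q 6 \<Longrightarrow> \<forall>k<3. Q (mu k)" using mu by metis
  have r2: "\<forall>i<3. \<forall>j<3. G 2 i j = G 0 i j + G 1 i j"
    using rep_add[OF rp, of 2 0 1] allmu[of "\<lambda>m. dd 2 m = dd 0 m + dd 1 m"] by (simp add: dd_def S_def S_num_def)
  have r4: "\<forall>i<3. \<forall>j<3. G 4 i j = G 3 i j"
    using rep_eq[OF rp, of 4 3] allmu[of "\<lambda>m. dd 4 m = dd 3 m"] by (simp add: dd_def S_def S_num_def)
  have r5: "\<forall>i<3. \<forall>j<3. G 5 i j = G 3 i j"
    using rep_eq[OF rp, of 5 3] allmu[of "\<lambda>m. dd 5 m = dd 3 m"] by (simp add: dd_def S_def S_num_def)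
  have r6: "\<forall>i<3. \<forall>j<3. G 6 i j = G 0 i j + G 3 i j"
    using rep_add[OF rp, of 6 0 3] allmu[of "\<lambda>m. dd 6 m = dd 0 m + dd 3 m"] by (simp add: dd_def S_def S_num_def)
  have r7: "\<forall>i<3. \<forall>j<3. G 7 i j = G 1 i j + G 3 i j"
    using rep_add[OF rp, of 7 1 3] allmu[of "\<lambda>m. dd 7 m = dd 1 m + dd 3 m"] by (simp add: dd_def S_def S_num_def)
  have "(of_nat (\<Sum>i<3. G 1 i i) :: complex) = (\<Sum>k<3. dd 1 (mu k))" by (rule rep_trace[OF un rp]) simp
  also have "\<dots> = sum_mset (image_mset (dd 1) {#0,2,6#})" by (rule msum[OF ms])
  also have "\<dots> = of_nat 1" by (simp add: dd_def S_def S_num_def)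
  finally have trP: "(\<Sum>i<3. G 1 i i) = 1" by (metis of_nat_eq_iff)
  have "(of_nat (\<Sum>i<3. G 3 i i) :: complex) = (\<Sum>k<3. dd 3 (mu k))" by (rule rep_trace[OF un rp]) simp
  also have "\<dots> = sum_mset (image_mset (dd 3) {#0,2,6#})" by (rule msum[OF ms])
  also have "\<dots> = of_nat 1" by (simp add: dd_def S_def S_num_def)
  finally have trY: "(\<Sum>i<3. G 3 i i) = 1" by (metis of_nat_eq_iff)
  have symP: "\<forall>i<3. \<forall>j<3. G 1 i j = G 1 j i" using nim_sym[OF nim, of 1] by auto
  have symY: "\<forall>i<3. \<forall>j<3. G 3 i j = G 3 j i" using nim_sym[OF nim, of 3] by auto
  have PP: "\<forall>i<3. \<forall>j<3. (\<Sum>k<3. G 1 i k * G 1 k j) = idm i j"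
  proof (intro allI impI)
    fix i j :: nat assume ij: "i<3" "j<3"
    hence "(of_nat (\<Sum>k<3. G 1 i k * G 1 k j) :: complex) = (\<Sum>v<8. of_int (Fi 1 1 v) / 216 * of_nat (G v i j))"
      by (intro nim_prod[OF nim]) auto
    also have "\<dots> = of_nat (G 0 i j)" by (simp add: sum8 Fi_def Sn_def wv_def S_num_def upt_rec)
    finally show "(\<Sum>k<3. G 1 i k * G 1 k j) = idm i j" using nim_id[OF nim ij] by (metis of_nat_eq_iff)
  qed
  have PY: "\<forall>i<3. \<forall>j<3. (\<Sum>k<3. G 1 i k * G 3 k j) = G 3 i j"
  proof (intro allI impI)
    fix i j :: nat assume ij: "i<3" "j<3"
    hence "(of_nat (\<Sum>k<3. G 1 i k * G 3 k j) :: complex) = (\<Sum>v<8. of_int (Fi 1 3 v) / 216 * of_nat (G v i j))"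
      by (intro nim_prod[OF nim]) auto
    also have "\<dots> = of_nat (G 3 i j)" by (simp add: sum8 Fi_def Sn_def wv_def S_num_def upt_rec)
    finally show "(\<Sum>k<3. G 1 i k * G 3 k j) = G 3 i j" by (metis of_nat_eq_iff)
  qed
  have YY: "\<forall>i<3. \<forall>j<3. (\<Sum>k<3. G 3 i k * G 3 k j) = idm i j + G 1 i j + G 3 i j"
  proof (intro allI impI)
    fix i j :: nat assume ij: "i<3" "j<3"
    hence "(of_nat (\<Sum>k<3. G 3 i k * G 3 k j) :: complex) = (\<Sum>v<8. of_int (Fi 3 3 v) / 216 * of_nat (G v i j))"
      by (intro nim_prod[OF nim]) auto
    also have "\<dots> = of_nat (G 0 i j + G 1 i j + G 3 i j)" by (simp add: sum8 Fi_def Sn_def wv_def S_num_def upt_rec)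
    finally show "(\<Sum>k<3. G 3 i k * G 3 k j) = idm i j + G 1 i j + G 3 i j" using nim_id[OF nim ij] by (metis of_nat_eq_iff)
  qed
  obtain a where a: "a < 3" and PYa: "\<forall>i<3. \<forall>j<3. G 1 i j = Pf a i j \<and> G 3 i j = Yf a i j"
    using coreC[OF symP symY PP PY YY trP trY] by blast
  have "\<forall>l<8. \<forall>i<3. \<forall>j<3. G l i j = canC a l i j"
  proof (intro allI impI)
    fix l i j :: nat assume l: "l<8" and i: "i<3" and j: "j<3"
    note f = nim_id[OF nim i j] PYa[rule_format, OF i j] r2[rule_format, OF i j] r4[rule_format, OF i j]
      r5[rule_format, OF i j] r6[rule_format, OF i j] r7[rule_format, OF i j]
    from l8_cases[OF l] show "G l i j = canC a l i j"
      by (elim disjE) (simp_all add: canC_def f f[simplified])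
  qed
  thus ?thesis using a by blast
qed

lemma uniqD:
  assumes nim: "nimrep 3 G" and un: "unitary_mat 3 U" and ms: "mset (map mu [0..<3]) = {#0,2,7#}"
    and rp: "rep 3 U mu G"
  shows "\<exists>a<3. \<forall>l<8. \<forall>i<3. \<forall>j<3. G l i j = canD a l i j"
proof -
  have mu: "mu k = 0 \<or> mu k = 2 \<or> mu k = 7" if "k<3" for k using mu_in[OF ms that] by auto
  have allmu: "\<And>Q. Q 0 \<Longrightarrow> Q 2 \<Longrightarrow> Q 7 \<Longrightarrow> \<forall>k<3. Q (mu k)" using mu by metis
  have r2: "\<forall>i<3. \<forall>j<3. G 2 i j = G 0 i j + G 1 i j"
    using rep_add[OF rp, of 2 0 1] allmu[of "\<lambda>m. dd 2 m = dd 0 m + dd 1 m"] by (simp add: dd_def S_def S_num_def)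
  have r4: "\<forall>i<3. \<forall>j<3. G 4 i j = G 3 i j"
    using rep_eq[OF rp, of 4 3] allmu[of "\<lambda>m. dd 4 m = dd 3 m"] by (simp add: dd_def S_def S_num_def)
  have r5: "\<forall>i<3. \<forall>j<3. G 5 i j = G 3 i j"
    using rep_eq[OF rp, of 5 3] allmu[of "\<lambda>m. dd 5 m = dd 3 m"] by (simp add: dd_def S_def S_num_def)
  have r6: "\<forall>i<3. \<forall>j<3. G 6 i j = G 1 i j + G 3 i j"
    using rep_add[OF rp, of 6 1 3] allmu[of "\<lambda>m. dd 6 m = dd 1 m + dd 3 m"] by (simp add: dd_def S_def S_num_def)
  have r7: "\<forall>i<3. \<forall>j<3. G 7 i j = G 0 i j + G 3 i j"
    using rep_add[OF rp, of 7 0 3] allmu[of "\<lambda>m. dd 7 m = dd 0 m + dd 3 m"] by (simp add: dd_def S_def S_num_def)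
  have "(of_nat (\<Sum>i<3. G 1 i i) :: complex) = (\<Sum>k<3. dd 1 (mu k))" by (rule rep_trace[OF un rp]) simp
  also have "\<dots> = sum_mset (image_mset (dd 1) {#0,2,7#})" by (rule msum[OF ms])
  also have "\<dots> = of_nat 1" by (simp add: dd_def S_def S_num_def)
  finally have trP: "(\<Sum>i<3. G 1 i i) = 1" by (metis of_nat_eq_iff)
  have "(of_nat (\<Sum>i<3. G 3 i i) :: complex) = (\<Sum>k<3. dd 3 (mu k))" by (rule rep_trace[OF un rp]) simp
  also have "\<dots> = sum_mset (image_mset (dd 3) {#0,2,7#})" by (rule msum[OF ms])
  also have "\<dots> = of_nat 1" by (simp add: dd_def S_def S_num_def)
  finally have trY: "(\<Sum>i<3. G 3 i i) = 1" by (metis of_nat_eq_iff)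
  have symP: "\<forall>i<3. \<forall>j<3. G 1 i j = G 1 j i" using nim_sym[OF nim, of 1] by auto
  have symY: "\<forall>i<3. \<forall>j<3. G 3 i j = G 3 j i" using nim_sym[OF nim, of 3] by auto
  have PP: "\<forall>i<3. \<forall>j<3. (\<Sum>k<3. G 1 i k * G 1 k j) = idm i j"
  proof (intro allI impI)
    fix i j :: nat assume ij: "i<3" "j<3"
    hence "(of_nat (\<Sum>k<3. G 1 i k * G 1 k j) :: complex) = (\<Sum>v<8. of_int (Fi 1 1 v) / 216 * of_nat (G v i j))"
      by (intro nim_prod[OF nim]) auto
    also have "\<dots> = of_nat (G 0 i j)" by (simp add: sum8 Fi_def Sn_def wv_def S_num_def upt_rec)
    finally show "(\<Sum>k<3. G 1 i k * G 1 k j) = idm i j" using nim_id[OF nim ij] by (metis of_nat_eq_iff)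
  qed
  have PY: "\<forall>i<3. \<forall>j<3. (\<Sum>k<3. G 1 i k * G 3 k j) = G 3 i j"
  proof (intro allI impI)
    fix i j :: nat assume ij: "i<3" "j<3"
    hence "(of_nat (\<Sum>k<3. G 1 i k * G 3 k j) :: complex) = (\<Sum>v<8. of_int (Fi 1 3 v) / 216 * of_nat (G v i j))"
      by (intro nim_prod[OF nim]) auto
    also have "\<dots> = of_nat (G 3 i j)" by (simp add: sum8 Fi_def Sn_def wv_def S_num_def upt_rec)
    finally show "(\<Sum>k<3. G 1 i k * G 3 k j) = G 3 i j" by (metis of_nat_eq_iff)
  qed
  have YY: "\<forall>i<3. \<forall>j<3. (\<Sum>k<3. G 3 i k * G 3 k j) = idm i j + G 1 i j + G 3 i j"
  proof (intro allI impI)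
    fix i j :: nat assume ij: "i<3" "j<3"
    hence "(of_nat (\<Sum>k<3. G 3 i k * G 3 k j) :: complex) = (\<Sum>v<8. of_int (Fi 3 3 v) / 216 * of_nat (G v i j))"
      by (intro nim_prod[OF nim]) auto
    also have "\<dots> = of_nat (G 0 i j + G 1 i j + G 3 i j)" by (simp add: sum8 Fi_def Sn_def wv_def S_num_def upt_rec)
    finally show "(\<Sum>k<3. G 3 i k * G 3 k j) = idm i j + G 1 i j + G 3 i j" using nim_id[OF nim ij] by (metis of_nat_eq_iff)
  qed
  obtain a where a: "a < 3" and PYa: "\<forall>i<3. \<forall>j<3. G 1 i j = Pf a i j \<and> G 3 i j = Yf a i j"
    using coreC[OF symP symY PP PY YY trP trY] by blast
  have "\<forall>l<8. \<forall>i<3. \<forall>j<3. G l i j = canD a l i j"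
  proof (intro allI impI)
    fix l i j :: nat assume l: "l<8" and i: "i<3" and j: "j<3"
    note f = nim_id[OF nim i j] PYa[rule_format, OF i j] r2[rule_format, OF i j] r4[rule_format, OF i j]
      r5[rule_format, OF i j] r6[rule_format, OF i j] r7[rule_format, OF i j]
    from l8_cases[OF l] show "G l i j = canD a l i j"
      by (elim disjE) (simp_all add: canD_def f f[simplified])
  qed
  thus ?thesis using a by blast
qed

lemma uniqE:
  assumes nim: "nimrep 3 G" and un: "unitary_mat 3 U" and ms: "mset (map mu [0..<3]) = {#0,3,7#}"
    and rp: "rep 3 U mu G"
  shows "\<exists>a<3. \<forall>l<8. \<forall>i<3. \<forall>j<3. G l i j = canE a l i j"
proof -
  have mu: "mu k = 0 \<or> mu k = 3 \<or> mu k = 7" if "k<3" for k using mu_in[OF ms that] by auto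
  have allmu: "\<And>Q. Q 0 \<Longrightarrow> Q 3 \<Longrightarrow> Q 7 \<Longrightarrow> \<forall>k<3. Q (mu k)" using mu by metis
  have r2: "\<forall>i<3. \<forall>j<3. G 3 i j = G 0 i j + G 1 i j"
    using rep_add[OF rp, of 3 0 1] allmu[of "\<lambda>m. dd 3 m = dd 0 m + dd 1 m"] by (simp add: dd_def S_def S_num_def)
  have r4: "\<forall>i<3. \<forall>j<3. G 4 i j = G 2 i j"
    using rep_eq[OF rp, of 4 2] allmu[of "\<lambda>m. dd 4 m = dd 2 m"] by (simp add: dd_def S_def S_num_def)
  have r5: "\<forall>i<3. \<forall>j<3. G 5 i j = G 2 i j"
    using rep_eq[OF rp, of 5 2] allmu[of "\<lambda>m. dd 5 m = dd 2 m"] by (simp add: dd_def S_def S_num_def)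
  have r6: "\<forall>i<3. \<forall>j<3. G 6 i j = G 1 i j + G 2 i j"
    using rep_add[OF rp, of 6 1 2] allmu[of "\<lambda>m. dd 6 m = dd 1 m + dd 2 m"] by (simp add: dd_def S_def S_num_def)
  have r7: "\<forall>i<3. \<forall>j<3. G 7 i j = G 0 i j + G 2 i j"
    using rep_add[OF rp, of 7 0 2] allmu[of "\<lambda>m. dd 7 m = dd 0 m + dd 2 m"] by (simp add: dd_def S_def S_num_def)
  have "(of_nat (\<Sum>i<3. G 1 i i) :: complex) = (\<Sum>k<3. dd 1 (mu k))" by (rule rep_trace[OF un rp]) simp
  also have "\<dots> = sum_mset (image_mset (dd 1) {#0,3,7#})" by (rule msum[OF ms])
  also have "\<dots> = of_nat 1" by (simp add: dd_def S_def S_num_def)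
  finally have trP: "(\<Sum>i<3. G 1 i i) = 1" by (metis of_nat_eq_iff)
  have "(of_nat (\<Sum>i<3. G 2 i i) :: complex) = (\<Sum>k<3. dd 2 (mu k))" by (rule rep_trace[OF un rp]) simp
  also have "\<dots> = sum_mset (image_mset (dd 2) {#0,3,7#})" by (rule msum[OF ms])
  also have "\<dots> = of_nat 1" by (simp add: dd_def S_def S_num_def)
  finally have trY: "(\<Sum>i<3. G 2 i i) = 1" by (metis of_nat_eq_iff)
  have symP: "\<forall>i<3. \<forall>j<3. G 1 i j = G 1 j i" using nim_sym[OF nim, of 1] by auto
  have symY: "\<forall>i<3. \<forall>j<3. G 2 i j = G 2 j i" using nim_sym[OF nim, of 2] by auto
  have PP: "\<forall>i<3. \<forall>j<3. (\<Sum>k<3. G 1 i k * G 1 k j) = idm i j"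
  proof (intro allI impI)
    fix i j :: nat assume ij: "i<3" "j<3"
    hence "(of_nat (\<Sum>k<3. G 1 i k * G 1 k j) :: complex) = (\<Sum>v<8. of_int (Fi 1 1 v) / 216 * of_nat (G v i j))"
      by (intro nim_prod[OF nim]) auto
    also have "\<dots> = of_nat (G 0 i j)" by (simp add: sum8 Fi_def Sn_def wv_def S_num_def upt_rec)
    finally show "(\<Sum>k<3. G 1 i k * G 1 k j) = idm i j" using nim_id[OF nim ij] by (metis of_nat_eq_iff)
  qed
  have PY: "\<forall>i<3. \<forall>j<3. (\<Sum>k<3. G 1 i k * G 2 k j) = G 2 i j"
  proof (intro allI impI)
    fix i j :: nat assume ij: "i<3" "j<3"
    hence "(of_nat (\<Sum>k<3. G 1 i k * G 2 k j) :: complex) = (\<Sum>v<8. of_int (Fi 1 2 v) / 216 * of_nat (G v i j))"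
      by (intro nim_prod[OF nim]) auto
    also have "\<dots> = of_nat (G 2 i j)" by (simp add: sum8 Fi_def Sn_def wv_def S_num_def upt_rec)
    finally show "(\<Sum>k<3. G 1 i k * G 2 k j) = G 2 i j" by (metis of_nat_eq_iff)
  qed
  have YY: "\<forall>i<3. \<forall>j<3. (\<Sum>k<3. G 2 i k * G 2 k j) = idm i j + G 1 i j + G 2 i j"
  proof (intro allI impI)
    fix i j :: nat assume ij: "i<3" "j<3"
    hence "(of_nat (\<Sum>k<3. G 2 i k * G 2 k j) :: complex) = (\<Sum>v<8. of_int (Fi 2 2 v) / 216 * of_nat (G v i j))"
      by (intro nim_prod[OF nim]) auto
    also have "\<dots> = of_nat (G 0 i j + G 1 i j + G 2 i j)" by (simp add: sum8 Fi_def Sn_def wv_def S_num_def upt_rec)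
    finally show "(\<Sum>k<3. G 2 i k * G 2 k j) = idm i j + G 1 i j + G 2 i j" using nim_id[OF nim ij] by (metis of_nat_eq_iff)
  qed
  obtain a where a: "a < 3" and PYa: "\<forall>i<3. \<forall>j<3. G 1 i j = Pf a i j \<and> G 2 i j = Yf a i j"
    using coreC[OF symP symY PP PY YY trP trY] by blast
  have "\<forall>l<8. \<forall>i<3. \<forall>j<3. G l i j = canE a l i j"
  proof (intro allI impI)
    fix l i j :: nat assume l: "l<8" and i: "i<3" and j: "j<3"
    note f = nim_id[OF nim i j] PYa[rule_format, OF i j] r2[rule_format, OF i j] r4[rule_format, OF i j]
      r5[rule_format, OF i j] r6[rule_format, OF i j] r7[rule_format, OF i j]
    from l8_cases[OF l] show "G l i j = canE a l i j"
      by (elim disjE) (simp_all add: canE_def f f[simplified])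
  qed
  thus ?thesis using a by blast
qed

lemma uniqA:
  assumes nim: "nimrep 3 G" and un: "unitary_mat 3 U" and ms: "mset (map mu [0..<3]) = {#0,2,2#}"
    and rp: "rep 3 U mu G"
  shows "\<exists>a<3. \<forall>l<8. \<forall>i<3. \<forall>j<3. G l i j = canA a l i j"
proof -
  have mu: "mu k = 0 \<or> mu k = 2" if "k<3" for k using mu_in[OF ms that] by auto
  have allmu: "\<And>Q. Q 0 \<Longrightarrow> Q 2 \<Longrightarrow> \<forall>k<3. Q (mu k)" using mu by metis
  have r1: "\<forall>i<3. \<forall>j<3. G 1 i j = G 0 i j"
    using rep_eq[OF rp, of 1 0] allmu[of "\<lambda>m. dd 1 m = dd 0 m"] by (simp add: dd_def S_def S_num_def)
  have r2: "\<forall>i<3. \<forall>j<3. G 2 i j = G 0 i j + G 0 i j"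
    using rep_add[OF rp, of 2 0 0] allmu[of "\<lambda>m. dd 2 m = dd 0 m + dd 0 m"] by (simp add: dd_def S_def S_num_def)
  have r4: "\<forall>i<3. \<forall>j<3. G 4 i j = G 3 i j"
    using rep_eq[OF rp, of 4 3] allmu[of "\<lambda>m. dd 4 m = dd 3 m"] by (simp add: dd_def S_def S_num_def)
  have r5: "\<forall>i<3. \<forall>j<3. G 5 i j = G 3 i j"
    using rep_eq[OF rp, of 5 3] allmu[of "\<lambda>m. dd 5 m = dd 3 m"] by (simp add: dd_def S_def S_num_def)
  have r6: "\<forall>i<3. \<forall>j<3. G 6 i j = G 0 i j + G 3 i j"
    using rep_add[OF rp, of 6 0 3] allmu[of "\<lambda>m. dd 6 m = dd 0 m + dd 3 m"] by (simp add: dd_def S_def S_num_def)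
  have r7: "\<forall>i<3. \<forall>j<3. G 7 i j = G 6 i j"
    using rep_eq[OF rp, of 7 6] allmu[of "\<lambda>m. dd 7 m = dd 6 m"] by (simp add: dd_def S_def S_num_def)
  have "(of_nat (\<Sum>i<3. G 6 i i) :: complex) = (\<Sum>k<3. dd 6 (mu k))" by (rule rep_trace[OF un rp]) simp
  also have "\<dots> = sum_mset (image_mset (dd 6) {#0,2,2#})" by (rule msum[OF ms])
  also have "\<dots> = of_nat 3" by (simp add: dd_def S_def S_num_def)
  finally have trQ: "(\<Sum>i<3. G 6 i i) = 3" by (metis of_nat_eq_iff)
  have symQ: "\<forall>i<3. \<forall>j<3. G 6 i j = G 6 j i" using nim_sym[OF nim, of 6] by auto
  have QY: "\<forall>i<3. \<forall>j<3. G 6 i j = idm i j + G 3 i j" using r6 nim_id[OF nim] by auto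
  have QQ: "\<forall>i<3. \<forall>j<3. (\<Sum>k<3. G 6 i k * G 6 k j) = 3 * idm i j + 3 * G 3 i j"
  proof (intro allI impI)
    fix i j :: nat assume ij: "i<3" "j<3"
    hence "(of_nat (\<Sum>k<3. G 6 i k * G 6 k j) :: complex) = (\<Sum>v<8. of_int (Fi 6 6 v) / 216 * of_nat (G v i j))"
      by (intro nim_prod[OF nim]) auto
    also have "\<dots> = of_nat (G 0 i j + G 2 i j + G 3 i j + G 4 i j + G 5 i j)" by (simp add: sum8 Fi_def Sn_def wv_def S_num_def upt_rec)
    finally have "(\<Sum>k<3. G 6 i k * G 6 k j) = G 0 i j + G 2 i j + G 3 i j + G 4 i j + G 5 i j" by (metis of_nat_eq_iff)
    thus "(\<Sum>k<3. G 6 i k * G 6 k j) = 3 * idm i j + 3 * G 3 i j"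
      using nim_id[OF nim ij] r2[rule_format, OF ij] r4[rule_format, OF ij] r5[rule_format, OF ij] by simp
  qed
  have QYa: "\<forall>i<3. \<forall>j<3. G 6 i j = 1 \<and> G 3 i j = 1 - idm i j"
    using coreA[OF symQ QY QQ trQ] .
  have "\<forall>l<8. \<forall>i<3. \<forall>j<3. G l i j = canA 0 l i j"
  proof (intro allI impI)
    fix l i j :: nat assume l: "l<8" and i: "i<3" and j: "j<3"
    note f = nim_id[OF nim i j] QYa[rule_format, OF i j] r1[rule_format, OF i j] r2[rule_format, OF i j] r4[rule_format, OF i j]
      r5[rule_format, OF i j] r6[rule_format, OF i j] r7[rule_format, OF i j]
    from l8_cases[OF l] show "G l i j = canA 0 l i j"
      by (elim disjE) (simp_all add: canA_def f f[simplified])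
  qed
  thus ?thesis by (intro exI[where x=0]) simp
qed

lemma uniqB:
  assumes nim: "nimrep 3 G" and un: "unitary_mat 3 U" and ms: "mset (map mu [0..<3]) = {#0,3,3#}"
    and rp: "rep 3 U mu G"
  shows "\<exists>a<3. \<forall>l<8. \<forall>i<3. \<forall>j<3. G l i j = canB a l i j"
proof -
  have mu: "mu k = 0 \<or> mu k = 3" if "k<3" for k using mu_in[OF ms that] by auto
  have allmu: "\<And>Q. Q 0 \<Longrightarrow> Q 3 \<Longrightarrow> \<forall>k<3. Q (mu k)" using mu by metis
  have r1: "\<forall>i<3. \<forall>j<3. G 1 i j = G 0 i j"
    using rep_eq[OF rp, of 1 0] allmu[of "\<lambda>m. dd 1 m = dd 0 m"] by (simp add: dd_def S_def S_num_def)
  have r2: "\<forall>i<3. \<forall>j<3. G 3 i j = G 0 i j + G 0 i j"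
    using rep_add[OF rp, of 3 0 0] allmu[of "\<lambda>m. dd 3 m = dd 0 m + dd 0 m"] by (simp add: dd_def S_def S_num_def)
  have r4: "\<forall>i<3. \<forall>j<3. G 4 i j = G 2 i j"
    using rep_eq[OF rp, of 4 2] allmu[of "\<lambda>m. dd 4 m = dd 2 m"] by (simp add: dd_def S_def S_num_def)
  have r5: "\<forall>i<3. \<forall>j<3. G 5 i j = G 2 i j"
    using rep_eq[OF rp, of 5 2] allmu[of "\<lambda>m. dd 5 m = dd 2 m"] by (simp add: dd_def S_def S_num_def)
  have r6: "\<forall>i<3. \<forall>j<3. G 6 i j = G 0 i j + G 2 i j"
    using rep_add[OF rp, of 6 0 2] allmu[of "\<lambda>m. dd 6 m = dd 0 m + dd 2 m"] by (simp add: dd_def S_def S_num_def)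
  have r7: "\<forall>i<3. \<forall>j<3. G 7 i j = G 6 i j"
    using rep_eq[OF rp, of 7 6] allmu[of "\<lambda>m. dd 7 m = dd 6 m"] by (simp add: dd_def S_def S_num_def)
  have "(of_nat (\<Sum>i<3. G 6 i i) :: complex) = (\<Sum>k<3. dd 6 (mu k))" by (rule rep_trace[OF un rp]) simp
  also have "\<dots> = sum_mset (image_mset (dd 6) {#0,3,3#})" by (rule msum[OF ms])
  also have "\<dots> = of_nat 3" by (simp add: dd_def S_def S_num_def)
  finally have trQ: "(\<Sum>i<3. G 6 i i) = 3" by (metis of_nat_eq_iff)
  have symQ: "\<forall>i<3. \<forall>j<3. G 6 i j = G 6 j i" using nim_sym[OF nim, of 6] by auto
  have QY: "\<forall>i<3. \<forall>j<3. G 6 i j = idm i j + G 2 i j" using r6 nim_id[OF nim] by auto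
  have QQ: "\<forall>i<3. \<forall>j<3. (\<Sum>k<3. G 6 i k * G 6 k j) = 3 * idm i j + 3 * G 2 i j"
  proof (intro allI impI)
    fix i j :: nat assume ij: "i<3" "j<3"
    hence "(of_nat (\<Sum>k<3. G 6 i k * G 6 k j) :: complex) = (\<Sum>v<8. of_int (Fi 6 6 v) / 216 * of_nat (G v i j))"
      by (intro nim_prod[OF nim]) auto
    also have "\<dots> = of_nat (G 0 i j + G 2 i j + G 3 i j + G 4 i j + G 5 i j)" by (simp add: sum8 Fi_def Sn_def wv_def S_num_def upt_rec)
    finally have "(\<Sum>k<3. G 6 i k * G 6 k j) = G 0 i j + G 2 i j + G 3 i j + G 4 i j + G 5 i j" by (metis of_nat_eq_iff)
    thus "(\<Sum>k<3. G 6 i k * G 6 k j) = 3 * idm i j + 3 * G 2 i j"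
      using nim_id[OF nim ij] r2[rule_format, OF ij] r4[rule_format, OF ij] r5[rule_format, OF ij] by simp
  qed
  have QYa: "\<forall>i<3. \<forall>j<3. G 6 i j = 1 \<and> G 2 i j = 1 - idm i j"
    using coreA[OF symQ QY QQ trQ] .
  have "\<forall>l<8. \<forall>i<3. \<forall>j<3. G l i j = canB 0 l i j"
  proof (intro allI impI)
    fix l i j :: nat assume l: "l<8" and i: "i<3" and j: "j<3"
    note f = nim_id[OF nim i j] QYa[rule_format, OF i j] r1[rule_format, OF i j] r2[rule_format, OF i j] r4[rule_format, OF i j]
      r5[rule_format, OF i j] r6[rule_format, OF i j] r7[rule_format, OF i j]
    from l8_cases[OF l] show "G l i j = canB 0 l i j"
      by (elim disjE) (simp_all add: canB_def f f[simplified])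
  qed
  thus ?thesis by (intro exI[where x=0]) simp
qed

lemma la: "list_all P [0..<n] \<longleftrightarrow> (\<forall>i<n. P i)"
  by (auto simp: list_all_iff)

lemma sl: "(\<Sum>x\<leftarrow>[0..<n]. f x) = (\<Sum>x<n. f x)"
  by (simp add: sum_set_upt_conv_sum_list_nat[symmetric] atLeast_upt lessThan_atLeast0)

definition schk :: "(nat \<Rightarrow> nat \<Rightarrow> nat \<Rightarrow> nat) \<Rightarrow> bool" where
  "schk G = list_all (\<lambda>l. list_all (\<lambda>i. list_all (\<lambda>j.
     G l i j = G l j i \<and> G 0 i j = (if i = j then 1 else 0)) [0..<3]) [0..<3]) [0..<8]"

definition nchk :: "(nat \<Rightarrow> nat \<Rightarrow> nat \<Rightarrow> nat) \<Rightarrow> bool" where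
  "nchk G = list_all (\<lambda>l. list_all (\<lambda>m. list_all (\<lambda>i. list_all (\<lambda>j.
     216 * int (\<Sum>k\<leftarrow>[0..<3]. G l i k * G m k j) = (\<Sum>v\<leftarrow>[0..<8]. Fi l m v * int (G v i j)))
     [0..<3]) [0..<3]) [0..<8]) [0..<8]"

lemma nimrep_chk:
  assumes sc: "schk G" and nc: "nchk G"
  shows "nimrep 3 G"
proof -
  have S: "\<forall>l<8. \<forall>i<3. \<forall>j<3. G l i j = G l j i \<and> G 0 i j = (if i = j then 1 else 0)"
    using sc by (simp only: schk_def la)
  have N: "\<forall>l<8. \<forall>m<8. \<forall>i<3. \<forall>j<3. 216 * int (\<Sum>k<3. G l i k * G m k j) = (\<Sum>v<8. Fi l m v * int (G v i j))"
    using nc by (simp only: nchk_def la sl)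
  show ?thesis unfolding nimrep_def
  proof (intro conjI allI impI)
    fix i j assume ij: "i < (3::nat)" "j < (3::nat)"
    from S[rule_format, of 0 i j] ij show "G 0 i j = (if i = j then 1 else 0)" by simp
  next
    fix l i j assume lij: "l < (8::nat)" "i < (3::nat)" "j < (3::nat)"
    from S[rule_format, OF lij] show "G (prim_conj l) i j = G l j i" by (simp add: prim_conj_def)
  next
    fix l m i j assume lmij: "l < (8::nat)" "m < (8::nat)" "i < (3::nat)" "j < (3::nat)"
    have e: "216 * int (\<Sum>k<3. G l i k * G m k j) = (\<Sum>v<8. Fi l m v * int (G v i j))"
      using N lmij by blast
    have c: "(216::complex) * of_nat (\<Sum>k<3. G l i k * G m k j) = (\<Sum>v<8. of_int (Fi l m v) * of_nat (G v i j))"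
      using arg_cong[OF e, of "of_int :: int \<Rightarrow> complex"] by simp
    hence "(of_nat (\<Sum>k<3. G l i k * G m k j) :: complex) = (\<Sum>v<8. of_int (Fi l m v) * of_nat (G v i j)) / 216"
      by (simp add: eq_divide_eq mult.commute)
    thus "of_nat (\<Sum>k<3. G l i k * G m k j) = (\<Sum>v<8. fusion l m v * of_nat (G v i j))"
      by (simp add: fusion_Fi sum_divide_distrib)
  qed
qed

definition ddi :: "nat \<Rightarrow> nat \<Rightarrow> int" where "ddi l m = Sn l m div Sn 0 m"

lemma ddchk: "list_all (\<lambda>l. list_all (\<lambda>m. Sn 0 m \<noteq> 0 \<and> Sn l m = Sn 0 m * ddi l m) [0..<8]) [0..<8]"
  by code_simp

lemma dd_ddi:
  assumes "l < 8" "m < 8" shows "dd l m = of_int (ddi l m)"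
proof -
  have "\<forall>l<8. \<forall>m<8. Sn 0 m \<noteq> 0 \<and> Sn l m = Sn 0 m * ddi l m"
    using ddchk by (simp only: la)
  hence "Sn 0 m \<noteq> 0 \<and> Sn l m = Sn 0 m * ddi l m" using assms by blast
  hence "Sn 0 m \<noteq> 0" "Sn l m = Sn 0 m * ddi l m" by auto
  thus ?thesis by (simp add: dd_def S_Sn)
qed

definition Uof :: "(nat \<Rightarrow> int) \<Rightarrow> (nat \<Rightarrow> nat \<Rightarrow> int) \<Rightarrow> nat \<Rightarrow> nat \<Rightarrow> complex" where
  "Uof nn V a i = of_real (1 / sqrt (real_of_int (nn i))) * of_int (V a i)"

lemma Uof_sum1:
  "(\<Sum>k<n. cnj (Uof nn V k i) * Uof nn V k j) =
     of_real (1 / sqrt (real_of_int (nn i)) * (1 / sqrt (real_of_int (nn j)))) * of_int (\<Sum>k<n. V k i * V k j)"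
  by (simp add: Uof_def sum_distrib_left sum_divide_distrib mult_ac)

lemma Uof_sum2:
  "(\<Sum>a<n. \<Sum>b<n. cnj (Uof nn V a i) * of_nat (G a b) * Uof nn V b j) =
     of_real (1 / sqrt (real_of_int (nn i)) * (1 / sqrt (real_of_int (nn j)))) * of_int (\<Sum>a<n. \<Sum>b<n. V a i * int (G a b) * V b j)"
  by (simp add: Uof_def sum_distrib_left sum_divide_distrib mult_ac)

lemma csq: "x > 0 \<Longrightarrow> (of_real (1 / sqrt (real_of_int x) * (1 / sqrt (real_of_int x))) :: complex) * of_int x = 1"
proof -
  assume x: "x > 0"
  hence "1 / sqrt (real_of_int x) * (1 / sqrt (real_of_int x)) * real_of_int x = 1"
    by (simp add: field_simps)
  hence "(of_real (1 / sqrt (real_of_int x) * (1 / sqrt (real_of_int x)) * real_of_int x) :: complex) = 1" by simp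
  thus ?thesis by (metis of_real_mult of_real_of_int_eq)
qed

definition vchk :: "(nat \<Rightarrow> nat \<Rightarrow> int) \<Rightarrow> (nat \<Rightarrow> int) \<Rightarrow> bool" where
  "vchk V nn = list_all (\<lambda>i. list_all (\<lambda>j. 0 < nn i \<and>
     (\<Sum>k\<leftarrow>[0..<3]. V k i * V k j) = (if i = j then nn i else 0)) [0..<3]) [0..<3]"

definition dchk :: "(nat \<Rightarrow> nat \<Rightarrow> int) \<Rightarrow> (nat \<Rightarrow> int) \<Rightarrow> (nat \<Rightarrow> nat) \<Rightarrow> (nat \<Rightarrow> nat \<Rightarrow> nat \<Rightarrow> nat) \<Rightarrow> bool" where
  "dchk V nn mu G = list_all (\<lambda>l. list_all (\<lambda>i. list_all (\<lambda>j. mu i < 8 \<and>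
     (\<Sum>a\<leftarrow>[0..<3]. \<Sum>b\<leftarrow>[0..<3]. V a i * int (G l a b) * V b j) = (if i = j then nn i * ddi l (mu i) else 0))
     [0..<3]) [0..<3]) [0..<8]"

lemma exist_gen:
  assumes sc: "schk G" and nc: "nchk G" and tr: "trace8 Z = 3" and ex: "Exp Z = mset (map mu [0..<3])"
    and vc: "vchk V nn" and dc: "dchk V nn mu G"
  shows "matches Z 3 G"
  unfolding matches_def
proof (intro conjI exI)
  show "nimrep 3 G" by (rule nimrep_chk[OF sc nc])
  show "3 = trace8 Z" using tr by simp
  show "mset (map mu [0..<3]) = Exp Z" using ex by simp
  show "unitary_mat 3 (Uof nn V)" unfolding unitary_mat_def
  proof (intro allI impI)
    fix i j :: nat assume ij: "i < 3" "j < 3"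
    have p: "0 < nn i" and v: "(\<Sum>k<3. V k i * V k j) = (if i = j then nn i else 0)"
      using vc ij by (auto simp: vchk_def la sl)
    have e: "(\<Sum>k<3. cnj (Uof nn V k i) * Uof nn V k j) =
      of_real (1 / sqrt (real_of_int (nn i)) * (1 / sqrt (real_of_int (nn j)))) * of_int (if i = j then nn i else 0)"
      by (simp only: Uof_sum1 v)
    show "(\<Sum>k<3. cnj (Uof nn V k i) * Uof nn V k j) = (if i = j then 1 else 0)"
    proof (cases "i = j")
      case True thus ?thesis using e csq[OF p] by simp
    next
      case False thus ?thesis using e by simp
    qed
  qed
  show "\<forall>l<8. \<forall>i<3. \<forall>j<3. (\<Sum>a<3. \<Sum>b<3. cnj (Uof nn V a i) * of_nat (G l a b) * Uof nn V b j) =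
      (if i = j then S l (mu i) / S 0 (mu i) else 0)"
  proof (intro allI impI)
    fix l i j :: nat assume l: "l < 8" and ij: "i < 3" "j < 3"
    have p: "0 < nn i" using vc ij by (auto simp: vchk_def la)
    have m: "mu i < 8" and d: "(\<Sum>a<3. \<Sum>b<3. V a i * int (G l a b) * V b j) = (if i = j then nn i * ddi l (mu i) else 0)"
      using dc l ij by (auto simp: dchk_def la sl)
    have "S l (mu i) / S 0 (mu i) = of_int (ddi l (mu i))" using dd_ddi[OF l m] by (simp add: dd_def)
    moreover have e: "(\<Sum>a<3. \<Sum>b<3. cnj (Uof nn V a i) * of_nat (G l a b) * Uof nn V b j) =
      of_real (1 / sqrt (real_of_int (nn i)) * (1 / sqrt (real_of_int (nn j)))) * of_int (if i = j then nn i * ddi l (mu i) else 0)"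
      by (simp only: Uof_sum2 d)
    ultimately show "(\<Sum>a<3. \<Sum>b<3. cnj (Uof nn V a i) * of_nat (G l a b) * Uof nn V b j) =
      (if i = j then S l (mu i) / S 0 (mu i) else 0)"
    proof (cases "i = j")
      case True
      have "(of_real (1 / sqrt (real_of_int (nn i)) * (1 / sqrt (real_of_int (nn i)))) :: complex) * of_int (nn i * ddi l (mu i))
        = (of_real (1 / sqrt (real_of_int (nn i)) * (1 / sqrt (real_of_int (nn i)))) * of_int (nn i)) * of_int (ddi l (mu i))"
        by (simp add: mult.assoc)
      also have "\<dots> = of_int (ddi l (mu i))" using csq[OF p] by simp
      finally show ?thesis using True e \<open>S l (mu i) / S 0 (mu i) = of_int (ddi l (mu i))\<close> by simp
    next
      case False thus ?thesis using e by simp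
    qed
  qed
qed

definition VA :: "nat \<Rightarrow> nat \<Rightarrow> int" where "VA a i = [[1,1,1],[1,-1,1],[1,0,-2]] ! a ! i"
definition nnA :: "nat \<Rightarrow> int" where "nnA i = [3,2,6] ! i"
definition VC :: "nat \<Rightarrow> nat \<Rightarrow> int" where "VC a i = [[2,1,0],[1,-1,1],[1,-1,-1]] ! a ! i"
definition nnC :: "nat \<Rightarrow> int" where "nnC i = [6,3,2] ! i"
definition muA :: "nat \<Rightarrow> nat" where "muA k = [0,2,2] ! k"
definition muB :: "nat \<Rightarrow> nat" where "muB k = [0,3,3] ! k"
definition muC :: "nat \<Rightarrow> nat" where "muC k = [0,2,6] ! k"
definition muD :: "nat \<Rightarrow> nat" where "muD k = [0,2,7] ! k"
definition muE :: "nat \<Rightarrow> nat" where "muE k = [0,3,7] ! k"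

lemma rep2: "replicate_mset 2 x = {#x, x#}" by (simp add: numeral_2_eq_2)

lemma chkA: "schk (canA 0) \<and> nchk (canA 0) \<and> vchk VA nnA \<and> dchk VA nnA muA (canA 0)" by code_simp
lemma chkB: "schk (canB 0) \<and> nchk (canB 0) \<and> vchk VA nnA \<and> dchk VA nnA muB (canB 0)" by code_simp
lemma chkC: "schk (canC 0) \<and> nchk (canC 0) \<and> vchk VC nnC \<and> dchk VC nnC muC (canC 0)" by code_simp
lemma chkD: "schk (canD 0) \<and> nchk (canD 0) \<and> vchk VC nnC \<and> dchk VC nnC muD (canD 0)" by code_simp
lemma chkE: "schk (canE 0) \<and> nchk (canE 0) \<and> vchk VC nnC \<and> dchk VC nnC muE (canE 0)" by code_simp

lemma idm_t: "idm (transpose a b i) (transpose a b j) = idm i j"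
  by (auto simp: idm_def transpose_def)
lemma Pf_t: "Pf a (transpose a b i) (transpose a b j) = Pf b i j"
  by (auto simp: Pf_def transpose_def)
lemma Yf_t: "Yf a (transpose a b i) (transpose a b j) = Yf b i j"
  by (auto simp: Yf_def transpose_def)

lemma final_gen:
  fixes can :: "nat \<Rightarrow> nat \<Rightarrow> nat \<Rightarrow> nat \<Rightarrow> nat"
  assumes ex: "matches Z 3 (can 0)"
  and un: "\<And>n G. matches Z n G \<Longrightarrow> n = 3 \<and> (\<exists>a<3. \<forall>l<8. \<forall>i<3. \<forall>j<3. G l i j = can a l i j)"
  and tr: "\<And>a b l i j. can b l i j = can a l (transpose a b i) (transpose a b j)"
  shows "(\<exists>n G. matches Z n G) \<and> (\<forall>n G n' G'. matches Z n G \<longrightarrow> matches Z n' G' \<longrightarrow> nimrep_equiv n G n' G')"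
proof (intro conjI allI impI)
  show "\<exists>n G. matches Z n G" using ex by blast
next
  fix n G n' G' assume m: "matches Z n G" and m': "matches Z n' G'"
  obtain a where n: "n = 3" and a: "a < 3" and Ga: "\<forall>l<8. \<forall>i<3. \<forall>j<3. G l i j = can a l i j"
    using un[OF m] by blast
  obtain b where n': "n' = 3" and b: "b < 3" and Gb: "\<forall>l<8. \<forall>i<3. \<forall>j<3. G' l i j = can b l i j"
    using un[OF m'] by blast
  have p: "transpose a b permutes {..<3}" using a b by (intro permutes_swap_id) auto
  have pr: "transpose a b i < 3" if "i < 3" for i using that a b by (simp add: transpose_def)
  show "nimrep_equiv n G n' G'" unfolding nimrep_equiv_def
  proof (intro conjI exI[where x="transpose a b"] allI impI)
    show "n = n'" using n n' by simp
    show "transpose a b permutes {..<n}" using p n by simp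
    fix l i j :: nat assume l: "l < 8" and i: "i < n" and j: "j < n"
    have "G' l i j = can b l i j" using Gb l i j n by simp
    also have "\<dots> = can a l (transpose a b i) (transpose a b j)" by (rule tr)
    also have "\<dots> = G l (transpose a b i) (transpose a b j)" using Ga l pr i j n by simp
    finally show "G' l i j = G l (transpose a b i) (transpose a b j)" .
  qed
qed

lemma trA: "canA b l i j = canA a l (transpose a b i) (transpose a b j)" by (simp add: canA_def idm_t)
lemma trB: "canB b l i j = canB a l (transpose a b i) (transpose a b j)" by (simp add: canB_def idm_t)
lemma trC: "canC b l i j = canC a l (transpose a b i) (transpose a b j)" by (simp add: canC_def idm_t Pf_t Yf_t)
lemma trD: "canD b l i j = canD a l (transpose a b i) (transpose a b j)" by (simp add: canD_def idm_t Pf_t Yf_t)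
lemma trE: "canE b l i j = canE a l (transpose a b i) (transpose a b j)" by (simp add: canE_def idm_t Pf_t Yf_t)

lemma tr_Z24: "trace8 Z24 = 3" by (simp add: trace8_def sum8 Z24_def lin_prod_def s2_def s4_def vec_of_def)
lemma Exp_Z24: "Exp Z24 = {#0,2,2#}" by (simp add: Exp_def sum8 Z24_def lin_prod_def s2_def s4_def vec_of_def rep2)

lemma ex_Z24: "matches Z24 3 (canA 0)"
  by (rule exist_gen[where V=VA and nn=nnA and mu=muA])
     (use chkA tr_Z24 Exp_Z24 in \<open>simp_all add: muA_def upt_rec\<close>)

lemma un_Z24:
  assumes m: "matches Z24 n G"
  shows "n = 3 \<and> (\<exists>a<3. \<forall>l<8. \<forall>i<3. \<forall>j<3. G l i j = canA a l i j)"
proof -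
  have n: "n = 3" using matches_rep(2)[OF m] tr_Z24 by simp
  obtain U mu where "unitary_mat n U" "mset (map mu [0..<n]) = Exp Z24" "rep n U mu G"
    using matches_rep(3)[OF m] by blast
  thus ?thesis using uniqA[of G U mu] matches_rep(1)[OF m] n Exp_Z24 by simp
qed

lemma fin_Z24: "(\<exists>n G. matches Z24 n G) \<and> (\<forall>n G n' G'. matches Z24 n G \<longrightarrow> matches Z24 n' G' \<longrightarrow> nimrep_equiv n G n' G')"
  by (rule final_gen[OF ex_Z24 un_Z24 trA])

lemma tr_Z42: "trace8 Z42 = 3" by (simp add: trace8_def sum8 Z42_def lin_prod_def s4_def s2_def vec_of_def)
lemma Exp_Z42: "Exp Z42 = {#0,2,2#}" by (simp add: Exp_def sum8 Z42_def lin_prod_def s4_def s2_def vec_of_def rep2)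

lemma ex_Z42: "matches Z42 3 (canA 0)"
  by (rule exist_gen[where V=VA and nn=nnA and mu=muA])
     (use chkA tr_Z42 Exp_Z42 in \<open>simp_all add: muA_def upt_rec\<close>)

lemma un_Z42:
  assumes m: "matches Z42 n G"
  shows "n = 3 \<and> (\<exists>a<3. \<forall>l<8. \<forall>i<3. \<forall>j<3. G l i j = canA a l i j)"
proof -
  have n: "n = 3" using matches_rep(2)[OF m] tr_Z42 by simp
  obtain U mu where "unitary_mat n U" "mset (map mu [0..<n]) = Exp Z42" "rep n U mu G"
    using matches_rep(3)[OF m] by blast
  thus ?thesis using uniqA[of G U mu] matches_rep(1)[OF m] n Exp_Z42 by simp
qed

lemma fin_Z42: "(\<exists>n G. matches Z42 n G) \<and> (\<forall>n G n' G'. matches Z42 n G \<longrightarrow> matches Z42 n' G' \<longrightarrow> nimrep_equiv n G n' G')"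
  by (rule final_gen[OF ex_Z42 un_Z42 trA])

lemma tr_Z35: "trace8 Z35 = 3" by (simp add: trace8_def sum8 Z35_def lin_prod_def s3_def s5_def vec_of_def)
lemma Exp_Z35: "Exp Z35 = {#0,3,3#}" by (simp add: Exp_def sum8 Z35_def lin_prod_def s3_def s5_def vec_of_def rep2)

lemma ex_Z35: "matches Z35 3 (canB 0)"
  by (rule exist_gen[where V=VA and nn=nnA and mu=muB])
     (use chkB tr_Z35 Exp_Z35 in \<open>simp_all add: muB_def upt_rec\<close>)

lemma un_Z35:
  assumes m: "matches Z35 n G"
  shows "n = 3 \<and> (\<exists>a<3. \<forall>l<8. \<forall>i<3. \<forall>j<3. G l i j = canB a l i j)"
proof -
  have n: "n = 3" using matches_rep(2)[OF m] tr_Z35 by simp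
  obtain U mu where "unitary_mat n U" "mset (map mu [0..<n]) = Exp Z35" "rep n U mu G"
    using matches_rep(3)[OF m] by blast
  thus ?thesis using uniqB[of G U mu] matches_rep(1)[OF m] n Exp_Z35 by simp
qed

lemma fin_Z35: "(\<exists>n G. matches Z35 n G) \<and> (\<forall>n G n' G'. matches Z35 n G \<longrightarrow> matches Z35 n' G' \<longrightarrow> nimrep_equiv n G n' G')"
  by (rule final_gen[OF ex_Z35 un_Z35 trB])

lemma tr_Z53: "trace8 Z53 = 3" by (simp add: trace8_def sum8 Z53_def lin_prod_def s5_def s3_def vec_of_def)
lemma Exp_Z53: "Exp Z53 = {#0,3,3#}" by (simp add: Exp_def sum8 Z53_def lin_prod_def s5_def s3_def vec_of_def rep2)

lemma ex_Z53: "matches Z53 3 (canB 0)"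
  by (rule exist_gen[where V=VA and nn=nnA and mu=muB])
     (use chkB tr_Z53 Exp_Z53 in \<open>simp_all add: muB_def upt_rec\<close>)

lemma un_Z53:
  assumes m: "matches Z53 n G"
  shows "n = 3 \<and> (\<exists>a<3. \<forall>l<8. \<forall>i<3. \<forall>j<3. G l i j = canB a l i j)"
proof -
  have n: "n = 3" using matches_rep(2)[OF m] tr_Z53 by simp
  obtain U mu where "unitary_mat n U" "mset (map mu [0..<n]) = Exp Z53" "rep n U mu G"
    using matches_rep(3)[OF m] by blast
  thus ?thesis using uniqB[of G U mu] matches_rep(1)[OF m] n Exp_Z53 by simp
qed

lemma fin_Z53: "(\<exists>n G. matches Z53 n G) \<and> (\<forall>n G n' G'. matches Z53 n G \<longrightarrow> matches Z53 n' G' \<longrightarrow> nimrep_equiv n G n' G')"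
  by (rule final_gen[OF ex_Z53 un_Z53 trB])

lemma tr_Z44: "trace8 Z44 = 3" by (simp add: trace8_def sum8 Z44_def lin_prod_def s4_def vec_of_def)
lemma Exp_Z44: "Exp Z44 = {#0,2,6#}" by (simp add: Exp_def sum8 Z44_def lin_prod_def s4_def vec_of_def rep2)

lemma ex_Z44: "matches Z44 3 (canC 0)"
  by (rule exist_gen[where V=VC and nn=nnC and mu=muC])
     (use chkC tr_Z44 Exp_Z44 in \<open>simp_all add: muC_def upt_rec\<close>)

lemma un_Z44:
  assumes m: "matches Z44 n G"
  shows "n = 3 \<and> (\<exists>a<3. \<forall>l<8. \<forall>i<3. \<forall>j<3. G l i j = canC a l i j)"
proof -
  have n: "n = 3" using matches_rep(2)[OF m] tr_Z44 by simp
  obtain U mu where "unitary_mat n U" "mset (map mu [0..<n]) = Exp Z44" "rep n U mu G"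
    using matches_rep(3)[OF m] by blast
  thus ?thesis using uniqC[of G U mu] matches_rep(1)[OF m] n Exp_Z44 by simp
qed

lemma fin_Z44: "(\<exists>n G. matches Z44 n G) \<and> (\<forall>n G n' G'. matches Z44 n G \<longrightarrow> matches Z44 n' G' \<longrightarrow> nimrep_equiv n G n' G')"
  by (rule final_gen[OF ex_Z44 un_Z44 trC])

lemma tr_Z44p: "trace8 Z44p = 3" by (simp add: trace8_def sum8 Z44p_def mat_of_def)
lemma Exp_Z44p: "Exp Z44p = {#0,2,7#}" by (simp add: Exp_def sum8 Z44p_def mat_of_def rep2)

lemma ex_Z44p: "matches Z44p 3 (canD 0)"
  by (rule exist_gen[where V=VC and nn=nnC and mu=muD])
     (use chkD tr_Z44p Exp_Z44p in \<open>simp_all add: muD_def upt_rec\<close>)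

lemma un_Z44p:
  assumes m: "matches Z44p n G"
  shows "n = 3 \<and> (\<exists>a<3. \<forall>l<8. \<forall>i<3. \<forall>j<3. G l i j = canD a l i j)"
proof -
  have n: "n = 3" using matches_rep(2)[OF m] tr_Z44p by simp
  obtain U mu where "unitary_mat n U" "mset (map mu [0..<n]) = Exp Z44p" "rep n U mu G"
    using matches_rep(3)[OF m] by blast
  thus ?thesis using uniqD[of G U mu] matches_rep(1)[OF m] n Exp_Z44p by simp
qed

lemma fin_Z44p: "(\<exists>n G. matches Z44p n G) \<and> (\<forall>n G n' G'. matches Z44p n G \<longrightarrow> matches Z44p n' G' \<longrightarrow> nimrep_equiv n G n' G')"
  by (rule final_gen[OF ex_Z44p un_Z44p trD])

lemma tr_Z55p: "trace8 Z55p = 3" by (simp add: trace8_def sum8 Z55p_def mat_of_def)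
lemma Exp_Z55p: "Exp Z55p = {#0,3,7#}" by (simp add: Exp_def sum8 Z55p_def mat_of_def rep2)

lemma ex_Z55p: "matches Z55p 3 (canE 0)"
  by (rule exist_gen[where V=VC and nn=nnC and mu=muE])
     (use chkE tr_Z55p Exp_Z55p in \<open>simp_all add: muE_def upt_rec\<close>)

lemma un_Z55p:
  assumes m: "matches Z55p n G"
  shows "n = 3 \<and> (\<exists>a<3. \<forall>l<8. \<forall>i<3. \<forall>j<3. G l i j = canE a l i j)"
proof -
  have n: "n = 3" using matches_rep(2)[OF m] tr_Z55p by simp
  obtain U mu where "unitary_mat n U" "mset (map mu [0..<n]) = Exp Z55p" "rep n U mu G"
    using matches_rep(3)[OF m] by blast
  thus ?thesis using uniqE[of G U mu] matches_rep(1)[OF m] n Exp_Z55p by simp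
qed

lemma fin_Z55p: "(\<exists>n G. matches Z55p n G) \<and> (\<forall>n G n' G'. matches Z55p n G \<longrightarrow> matches Z55p n' G' \<longrightarrow> nimrep_equiv n G n' G')"
  by (rule final_gen[OF ex_Z55p un_Z55p trE])

theorem proposition6p5:
  shows "\<forall>Z \<in> {Z24, Z42, Z35, Z53, Z44, Z55p, Z44p}.
           (\<exists>n G. matches Z n G) \<and>
           (\<forall>n G n' G'. matches Z n G \<longrightarrow> matches Z n' G' \<longrightarrow> nimrep_equiv n G n' G')"
proof (intro ballI)
  fix Z assume "Z \<in> {Z24, Z42, Z35, Z53, Z44, Z55p, Z44p}"
  hence "Z = Z24 \<or> Z = Z42 \<or> Z = Z35 \<or> Z = Z53 \<or> Z = Z44 \<or> Z = Z55p \<or> Z = Z44p" by simp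
  thus "(\<exists>n G. matches Z n G) \<and>
           (\<forall>n G n' G'. matches Z n G \<longrightarrow> matches Z n' G' \<longrightarrow> nimrep_equiv n G n' G')"
  proof (elim disjE)
    assume z: "Z = Z24" show ?thesis unfolding z by (rule fin_Z24)
  next
    assume z: "Z = Z42" show ?thesis unfolding z by (rule fin_Z42)
  next
    assume z: "Z = Z35" show ?thesis unfolding z by (rule fin_Z35)
  next
    assume z: "Z = Z53" show ?thesis unfolding z by (rule fin_Z53)
  next
    assume z: "Z = Z44" show ?thesis unfolding z by (rule fin_Z44)
  next
    assume z: "Z = Z55p" show ?thesis unfolding z by (rule fin_Z55p)
  next
    assume z: "Z = Z44p" show ?thesis unfolding z by (rule fin_Z44p)
  qed
qed

end
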